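(* Let $A=(a_{ij})$ and $B=(b_{ij})$ be two $n\times n$ generalized tournament matrices. If $A$ and $B$ have the same principal minors of orders $2$ and $3$, then the connected components of $\mathcal{E}(A,B)$ and of $\mathcal{D}(A,B)$ are clans of $A$ and of $B$.
   Context: A generalized tournament matrix of order $n$ is a real $n\times n$ matrix $M=(m_{ij})$ with nonnegative entries satisfying $M+M^{t}=J_n-I_n$. Write $[n]=\{1,\ldots,n\}$. A clan of $M$ is a subset $X\subseteq[n]$ such that for all $i,j\in X$ and $k\in[n]\setminus X$, $m_{ik}=m_{jk}$ and $m_{ki}=m_{kj}$. When $A,B$ have the same principal minors of order $2$, for $i\neq j$ one has $a_{ij}=b_{ij}$ or $a_{ij}=1-b_{ij}$. Let $P_{=}=\{\{i,j\}: a_{ij}=b_{ij},\ a_{ij}\neq 1/2\}$ and $P_{\neq}=\{\{i,j\}: a_{ij}=1-b_{ij},\ a_{ij}\neq 1/2\}$. The equality graph $\mathcal{E}(A,B)$ and the difference graph $\mathcal{D}(A,B)$ are the undirected graphs on vertex set $[n]$ with edge sets $P_{=}$ and $P_{\neq}$ respectively. *)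

theory Defs
  imports "Jordan_Normal_Form.Determinant" "Jordan_Normal_Form.DL_Submatrix"
begin

text \<open>Matrices are n x n real matrices (type real mat); indices 0..<n play the role of [n].\<close>

definition gen_tournament :: "nat \<Rightarrow> real mat \<Rightarrow> bool" where
  "gen_tournament n M \<longleftrightarrow> M \<in> carrier_mat n n \<and>
     (\<forall>i<n. \<forall>j<n. M $$ (i,j) \<ge> 0) \<and>
     (\<forall>i<n. \<forall>j<n. M $$ (i,j) + M $$ (j,i) = (if i = j then 0 else 1))"

definition same_principal_minors :: "nat \<Rightarrow> nat \<Rightarrow> real mat \<Rightarrow> real mat \<Rightarrow> bool" where
  "same_principal_minors n k A B \<longleftrightarrow>
     (\<forall>I. I \<subseteq> {0..<n} \<longrightarrow> card I = k \<longrightarrow> det (submatrix A I I) = det (submatrix B I I))"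

definition clan :: "nat \<Rightarrow> real mat \<Rightarrow> nat set \<Rightarrow> bool" where
  "clan n M X \<longleftrightarrow> X \<subseteq> {0..<n} \<and>
     (\<forall>i\<in>X. \<forall>j\<in>X. \<forall>k\<in>{0..<n} - X. M $$ (i,k) = M $$ (j,k) \<and> M $$ (k,i) = M $$ (k,j))"

definition eq_graph :: "nat \<Rightarrow> real mat \<Rightarrow> real mat \<Rightarrow> (nat \<times> nat) set" where
  "eq_graph n A B = {(i,j). i < n \<and> j < n \<and> i \<noteq> j \<and>
     ((A $$ (i,j) = B $$ (i,j) \<and> A $$ (i,j) \<noteq> 1/2) \<or> (A $$ (j,i) = B $$ (j,i) \<and> A $$ (j,i) \<noteq> 1/2))}"

definition diff_graph :: "nat \<Rightarrow> real mat \<Rightarrow> real mat \<Rightarrow> (nat \<times> nat) set" where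
  "diff_graph n A B = {(i,j). i < n \<and> j < n \<and> i \<noteq> j \<and>
     ((A $$ (i,j) = 1 - B $$ (i,j) \<and> A $$ (i,j) \<noteq> 1/2) \<or> (A $$ (j,i) = 1 - B $$ (j,i) \<and> A $$ (j,i) \<noteq> 1/2))}"

definition components :: "nat \<Rightarrow> (nat \<times> nat) set \<Rightarrow> nat set set" where
  "components n E = (\<lambda>v. {w. w < n \<and> (v, w) \<in> E\<^sup>*}) ` {0..<n}"

end

theory Submission
  imports Defs
begin

lemma det1: "M \<in> carrier_mat 1 1 \<Longrightarrow> det (M::real mat) = M$$(0,0)"
  using det_single by auto

lemma det2: assumes "M \<in> carrier_mat 2 2" shows "det (M::real mat) = M$$(0,0)*M$$(1,1) - M$$(0,1)*M$$(1,0)"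
proof -
  have c: "mat_delete M i j \<in> carrier_mat 1 1" for i j using mat_delete_carrier[OF assms] by simp
  show ?thesis
  apply (subst laplace_expansion_row[of M 2 0], rule assms, simp)
  apply (simp add: cofactor_def numeral_2_eq_2 lessThan_Suc det1[OF c])
    using assms by (simp add: mat_delete_def insert_index_def)
qed

lemma det3: assumes "M \<in> carrier_mat 3 3" shows "det (M::real mat) =
  M$$(0,0)*(M$$(1,1)*M$$(2,2) - M$$(1,2)*M$$(2,1))
 - M$$(0,1)*(M$$(1,0)*M$$(2,2) - M$$(1,2)*M$$(2,0))
 + M$$(0,2)*(M$$(1,0)*M$$(2,1) - M$$(1,1)*M$$(2,0))"
proof -
  have c: "mat_delete M i j \<in> carrier_mat 2 2" for i j using mat_delete_carrier[OF assms] by simp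
  show ?thesis
  apply (subst laplace_expansion_row[of M 3 0], rule assms, simp)
  apply (simp add: cofactor_def numeral_3_eq_3 lessThan_Suc det2[OF c])
    using assms by (simp add: mat_delete_def insert_index_def numeral_2_eq_2 algebra_simps)
qed

lemma sub2_sorted:
  fixes A :: "real mat"
  assumes A: "A \<in> carrier_mat n n" and pq: "p < q" "q < n"
  shows "det (submatrix A {p,q} {p,q}) = A$$(p,p)*A$$(q,q) - A$$(p,q)*A$$(q,p)"
proof -
  let ?I = "{p,q}"
  have dr: "dim_row A = n" "dim_col A = n" using A by auto
  have cI: "{i. i < n \<and> i \<in> ?I} = ?I" using pq by auto
  have cd: "card ?I = 2" using pq by simp
  have car: "submatrix A ?I ?I \<in> carrier_mat 2 2"
  proof -
    have "dim_row (submatrix A ?I ?I) = 2" "dim_col (submatrix A ?I ?I) = 2"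
      unfolding dim_submatrix dr cI cd by (rule refl)+
    then show ?thesis unfolding carrier_mat_def by simp
  qed
  have s0: "{a\<in>?I. a < p} = {}" using pq by auto
  have c0: "card {a\<in>?I. a < p} = 0" unfolding s0 by simp
  have s1: "{a\<in>?I. a < q} = {p}" using pq by auto
  have c1: "card {a\<in>?I. a < q} = 1" unfolding s1 by simp
  have e: "submatrix A ?I ?I $$ (card {a\<in>?I. a < x}, card {a\<in>?I. a < y}) = A $$ (x,y)"
    if "x \<in> ?I" "y \<in> ?I" for x y
  proof (rule submatrix_index_card)
    show "x < dim_row A" "y < dim_col A" using that pq dr by auto
  qed (use that in auto)
  have e00: "submatrix A ?I ?I $$ (0,0) = A$$(p,p)" using e[of p p] unfolding c0 by simp
  have e01: "submatrix A ?I ?I $$ (0,1) = A$$(p,q)" using e[of p q] unfolding c0 c1 by simp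
  have e10: "submatrix A ?I ?I $$ (1,0) = A$$(q,p)" using e[of q p] unfolding c0 c1 by simp
  have e11: "submatrix A ?I ?I $$ (1,1) = A$$(q,q)" using e[of q q] unfolding c1 by simp
  show ?thesis unfolding det2[OF car] e00 e01 e10 e11 ..
qed

lemma sub3_sorted:
  fixes A :: "real mat"
  assumes A: "A \<in> carrier_mat n n" and pq: "p < q" "q < r" "r < n"
  shows "det (submatrix A {p,q,r} {p,q,r}) =
  A$$(p,p)*(A$$(q,q)*A$$(r,r) - A$$(q,r)*A$$(r,q))
 - A$$(p,q)*(A$$(q,p)*A$$(r,r) - A$$(q,r)*A$$(r,p))
 + A$$(p,r)*(A$$(q,p)*A$$(r,q) - A$$(q,q)*A$$(r,p))"
proof -
  let ?I = "{p,q,r}"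
  have dr: "dim_row A = n" "dim_col A = n" using A by auto
  have cI: "{i. i < n \<and> i \<in> ?I} = ?I" using pq by auto
  have cd: "card ?I = 3" using pq by simp
  have car: "submatrix A ?I ?I \<in> carrier_mat 3 3"
  proof -
    have "dim_row (submatrix A ?I ?I) = 3" "dim_col (submatrix A ?I ?I) = 3"
      unfolding dim_submatrix dr cI cd by (rule refl)+
    then show ?thesis unfolding carrier_mat_def by simp
  qed
  have s0: "{a\<in>?I. a < p} = {}" using pq by auto
  have c0: "card {a\<in>?I. a < p} = 0" unfolding s0 by simp
  have s1: "{a\<in>?I. a < q} = {p}" using pq by auto
  have c1: "card {a\<in>?I. a < q} = 1" unfolding s1 by simp
  have s2: "{a\<in>?I. a < r} = {p,q}" using pq by auto
  have c2: "card {a\<in>?I. a < r} = 2" unfolding s2 using pq by simp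
  have e: "submatrix A ?I ?I $$ (card {a\<in>?I. a < x}, card {a\<in>?I. a < y}) = A $$ (x,y)"
    if "x \<in> ?I" "y \<in> ?I" for x y
  proof (rule submatrix_index_card)
    show "x < dim_row A" "y < dim_col A" using that pq dr by auto
  qed (use that in auto)
  have e00: "submatrix A ?I ?I $$ (0,0) = A$$(p,p)" using e[of p p] unfolding c0 by simp
  have e01: "submatrix A ?I ?I $$ (0,1) = A$$(p,q)" using e[of p q] unfolding c0 c1 by simp
  have e02: "submatrix A ?I ?I $$ (0,2) = A$$(p,r)" using e[of p r] unfolding c0 c2 by simp
  have e10: "submatrix A ?I ?I $$ (1,0) = A$$(q,p)" using e[of q p] unfolding c0 c1 by simp
  have e11: "submatrix A ?I ?I $$ (1,1) = A$$(q,q)" using e[of q q] unfolding c1 by simp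
  have e12: "submatrix A ?I ?I $$ (1,2) = A$$(q,r)" using e[of q r] unfolding c1 c2 by simp
  have e20: "submatrix A ?I ?I $$ (2,0) = A$$(r,p)" using e[of r p] unfolding c0 c2 by simp
  have e21: "submatrix A ?I ?I $$ (2,1) = A$$(r,q)" using e[of r q] unfolding c1 c2 by simp
  have e22: "submatrix A ?I ?I $$ (2,2) = A$$(r,r)" using e[of r r] unfolding c2 by simp
  show ?thesis unfolding det3[OF car] e00 e01 e02 e10 e11 e12 e20 e21 e22 ..
qed

definition f3 :: "real mat \<Rightarrow> nat \<Rightarrow> nat \<Rightarrow> nat \<Rightarrow> real" where
  "f3 A i j k = A$$(i,j)*A$$(j,k)*A$$(k,i) + A$$(i,k)*A$$(k,j)*A$$(j,i)"

lemma gt_diag: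
  assumes "gen_tournament n A" "x < n" shows "A$$(x,x) = 0"
proof -
  have "A$$(x,x) + A$$(x,x) = 0" using assms unfolding gen_tournament_def by auto
  then show ?thesis by simp
qed

lemma f3_sorted:
  assumes "gen_tournament n A" "p < q" "q < r" "r < n"
  shows "det (submatrix A {p,q,r} {p,q,r}) = f3 A p q r"
proof -
  have car: "A \<in> carrier_mat n n" using assms(1) unfolding gen_tournament_def by simp
  have d: "A$$(p,p) = 0" "A$$(q,q) = 0" "A$$(r,r) = 0" using gt_diag[OF assms(1)] assms by auto
  show ?thesis unfolding sub3_sorted[OF car assms(2-4)] d f3_def by (simp add: algebra_simps)
qed

lemma f3_det:
  assumes "gen_tournament n A" "i < n" "j < n" "k < n" "i \<noteq> j" "i \<noteq> k" "j \<noteq> k"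
  shows "det (submatrix A {i,j,k} {i,j,k}) = f3 A i j k"
proof -
  have s: "{i,j,k} = {j,i,k}" "{i,j,k} = {i,k,j}" "{i,j,k} = {k,i,j}" "{i,j,k} = {j,k,i}" "{i,j,k} = {k,j,i}"
    by auto
  have sy: "f3 A i j k = f3 A j i k" "f3 A i j k = f3 A i k j" "f3 A i j k = f3 A k i j"
    "f3 A i j k = f3 A j k i" "f3 A i j k = f3 A k j i"
    unfolding f3_def by (simp_all add: algebra_simps)
  consider "i<j" "j<k" | "j<i" "i<k" | "i<k" "k<j" | "k<i" "i<j" | "j<k" "k<i" | "k<j" "j<i"
    using assms(5-7) by (metis linorder_neqE_nat)
  then show ?thesis
  proof cases
    case 1 then show ?thesis using f3_sorted[OF assms(1)] assms by simp
  next
    case 2 then show ?thesis using f3_sorted[OF assms(1), of j i k] assms unfolding s(1) sy(1) by simp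
  next
    case 3 then show ?thesis using f3_sorted[OF assms(1), of i k j] assms unfolding s(2) sy(2) by simp
  next
    case 4 then show ?thesis using f3_sorted[OF assms(1), of k i j] assms unfolding s(3) sy(3) by simp
  next
    case 5 then show ?thesis using f3_sorted[OF assms(1), of j k i] assms unfolding s(4) sy(4) by simp
  next
    case 6 then show ?thesis using f3_sorted[OF assms(1), of k j i] assms unfolding s(5) sy(5) by simp
  qed
qed

lemma det2_gen:
  assumes "gen_tournament n A" "i < n" "j < n" "i \<noteq> j"
  shows "det (submatrix A {i,j} {i,j}) = - A$$(i,j) * (1 - A$$(i,j))"
proof -
  have d: "A $$ (x,x) = 0" if "x < n" for x using gt_diag[OF assms(1) that] .
  have t: "A$$(j,i) = 1 - A$$(i,j)" using assms unfolding gen_tournament_def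
    by (metis add_diff_cancel_left')
  have car: "A \<in> carrier_mat n n" using assms(1) unfolding gen_tournament_def by simp
  show ?thesis
  proof (cases "i < j")
    case True
    then show ?thesis using sub2_sorted[OF car True assms(3)] d assms t by simp
  next
    case False
    then have "j < i" using assms by simp
    have "{i,j} = {j,i}" by auto
    then have "det (submatrix A {i,j} {i,j}) = det (submatrix A {j,i} {j,i})" by (simp only:)
    then show ?thesis using sub2_sorted[OF car \<open>j<i\<close> assms(2)] d[of i] d[of j] assms t
      by (simp add: algebra_simps)
  qed
qed

lemma gt_car: "gen_tournament n A \<Longrightarrow> A \<in> carrier_mat n n"
  unfolding gen_tournament_def by simp

lemma gt_anti: "gen_tournament n A \<Longrightarrow> i < n \<Longrightarrow> j < n \<Longrightarrow> i \<noteq> j \<Longrightarrow> A$$(j,i) = 1 - A$$(i,j)"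
  unfolding gen_tournament_def by (metis add_diff_cancel_left')

lemma b_cases:
  assumes "gen_tournament n A" "gen_tournament n B" "same_principal_minors n 2 A B"
    "i < n" "j < n" "i \<noteq> j"
  shows "B$$(i,j) = A$$(i,j) \<or> B$$(i,j) = 1 - A$$(i,j)"
proof -
  have "{i,j} \<subseteq> {0..<n}" "card {i,j} = 2" using assms by auto
  then have "det (submatrix A {i,j} {i,j}) = det (submatrix B {i,j} {i,j})"
    using assms(3) unfolding same_principal_minors_def by blast
  then have e: "- A$$(i,j) * (1 - A$$(i,j)) = - B$$(i,j) * (1 - B$$(i,j))"
    using det2_gen[OF assms(1,4,5,6)] det2_gen[OF assms(2,4,5,6)] by simp
  have "(B$$(i,j) - A$$(i,j)) * (B$$(i,j) - (1 - A$$(i,j))) = 0"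
    using e by (simp add: algebra_simps)
  then show ?thesis by auto
qed

lemma key:
  assumes gA: "gen_tournament n A" and gB: "gen_tournament n B" and s3: "same_principal_minors n 3 A B"
    and ijk: "i < n" "j < n" "k < n" "i \<noteq> j" "i \<noteq> k" "j \<noteq> k"
    and x: "A$$(i,j) \<noteq> 1/2"
    and c: "(B$$(i,j) = A$$(i,j) \<and> B$$(i,k) = 1 - A$$(i,k) \<and> B$$(j,k) = 1 - A$$(j,k)) \<or>
            (B$$(i,j) = 1 - A$$(i,j) \<and> B$$(i,k) = A$$(i,k) \<and> B$$(j,k) = A$$(j,k))"
  shows "A$$(i,k) = A$$(j,k)"
proof -
  have "{i,j,k} \<subseteq> {0..<n}" "card {i,j,k} = 3" using ijk by auto
  then have "det (submatrix A {i,j,k} {i,j,k}) = det (submatrix B {i,j,k} {i,j,k})"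
    using s3 unfolding same_principal_minors_def by blast
  then have e: "f3 A i j k = f3 B i j k"
    using f3_det[OF gA ijk] f3_det[OF gB ijk] by simp
  define xx where "xx = A$$(i,j)"
  define y where "y = A$$(i,k)"
  define z where "z = A$$(j,k)"
  have aA: "A$$(j,i) = 1 - xx" "A$$(k,i) = 1 - y" "A$$(k,j) = 1 - z"
    using gt_anti[OF gA ijk(1) ijk(2) ijk(4)] gt_anti[OF gA ijk(1) ijk(3) ijk(5)]
      gt_anti[OF gA ijk(2) ijk(3) ijk(6)] unfolding xx_def y_def z_def by simp_all
  have aB: "B$$(j,i) = 1 - B$$(i,j)" "B$$(k,i) = 1 - B$$(i,k)" "B$$(k,j) = 1 - B$$(j,k)"
    using gt_anti[OF gB ijk(1) ijk(2) ijk(4)] gt_anti[OF gB ijk(1) ijk(3) ijk(5)]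
      gt_anti[OF gB ijk(2) ijk(3) ijk(6)] by simp_all
  have e2: "xx*z*(1-y) + y*(1-z)*(1-xx) = B$$(i,j)*B$$(j,k)*(1-B$$(i,k)) + B$$(i,k)*(1-B$$(j,k))*(1-B$$(i,j))"
    using e unfolding f3_def aA aB xx_def[symmetric] y_def[symmetric] z_def[symmetric] .
  have c': "(B$$(i,j) = xx \<and> B$$(i,k) = 1 - y \<and> B$$(j,k) = 1 - z) \<or>
            (B$$(i,j) = 1 - xx \<and> B$$(i,k) = y \<and> B$$(j,k) = z)"
    using c unfolding xx_def y_def z_def .
  have "(2*xx - 1) * (z - y) = 0"
    using c'
  proof
    assume h: "B$$(i,j) = xx \<and> B$$(i,k) = 1 - y \<and> B$$(j,k) = 1 - z"
    then have e3: "xx*z*(1-y) + y*(1-z)*(1-xx) = xx*(1-z)*(1-(1-y)) + (1-y)*(1-(1-z))*(1-xx)"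
      using e2 by simp
    have "(2*xx - 1) * (z - y) = (xx*z*(1-y) + y*(1-z)*(1-xx)) - (xx*(1-z)*(1-(1-y)) + (1-y)*(1-(1-z))*(1-xx))"
      by (simp add: algebra_simps)
    then show ?thesis using e3 by simp
  next
    assume h: "B$$(i,j) = 1 - xx \<and> B$$(i,k) = y \<and> B$$(j,k) = z"
    then have e3: "xx*z*(1-y) + y*(1-z)*(1-xx) = (1-xx)*z*(1-y) + y*(1-z)*(1-(1-xx))"
      using e2 by simp
    have "(2*xx - 1) * (z - y) = (xx*z*(1-y) + y*(1-z)*(1-xx)) - ((1-xx)*z*(1-y) + y*(1-z)*(1-(1-xx)))"
      by (simp add: algebra_simps)
    then show ?thesis using e3 by simp
  qed
  moreover have "2*xx - 1 \<noteq> 0" using x unfolding xx_def by simp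
  ultimately show ?thesis unfolding y_def z_def by simp
qed

lemma comp_clan:
  assumes gt: "gen_tournament n M" and Esub: "E \<subseteq> {(i,j). i < n \<and> j < n \<and> i \<noteq> j}"
    and H: "\<And>i j k. (i,j) \<in> E \<Longrightarrow> k < n \<Longrightarrow> k \<noteq> i \<Longrightarrow> k \<noteq> j \<Longrightarrow> (i,k) \<notin> E \<Longrightarrow> (j,k) \<notin> E
       \<Longrightarrow> M$$(i,k) = M$$(j,k)"
    and v: "v < n"
  shows "clan n M {w. w < n \<and> (v,w) \<in> E\<^sup>*}"
proof -
  let ?C = "{w. w < n \<and> (v,w) \<in> E\<^sup>*}"
  have main: "M$$(w,k) = M$$(v,k)" if k: "k < n" "(v,k) \<notin> E\<^sup>*" and w: "(v,w) \<in> E\<^sup>*" for w k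
    using w
  proof (induction rule: rtrancl_induct)
    case base
    then show ?case by (rule refl)
  next
    case (step u u')
    have vu': "(v,u') \<in> E\<^sup>*" using step(1,2) by (rule rtrancl.rtrancl_into_rtrancl)
    have n1: "u \<noteq> k" using step(1) k(2) by metis
    have n2: "u' \<noteq> k" using vu' k(2) by metis
    have n3: "(u,k) \<notin> E" using step(1) k(2) by (metis rtrancl.rtrancl_into_rtrancl)
    have n4: "(u',k) \<notin> E" using vu' k(2) by (metis rtrancl.rtrancl_into_rtrancl)
    have "M$$(u,k) = M$$(u',k)" using H[OF step(2) k(1) n1[symmetric] n2[symmetric] n3 n4] .
    then show ?case using step(3) by simp
  qed
  have sub: "?C \<subseteq> {0..<n}" by auto
  show ?thesis unfolding clan_def
  proof (rule conjI[OF sub], intro ballI)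
    fix i j k assume i: "i \<in> ?C" and j: "j \<in> ?C" and k: "k \<in> {0..<n} - ?C"
    then have kk: "k < n" "(v,k) \<notin> E\<^sup>*" by auto
    have ii: "i < n" "(v,i) \<in> E\<^sup>*" using i by auto
    have jj: "j < n" "(v,j) \<in> E\<^sup>*" using j by auto
    have ik: "i \<noteq> k" using ii kk by metis
    have jk: "j \<noteq> k" using jj kk by metis
    have 1: "M$$(i,k) = M$$(j,k)" using main[OF kk ii(2)] main[OF kk jj(2)] by simp
    have 2: "M$$(k,i) = 1 - M$$(i,k)" by (rule gt_anti[OF gt ii(1) kk(1) ik])
    have 3: "M$$(k,j) = 1 - M$$(j,k)" by (rule gt_anti[OF gt jj(1) kk(1) jk])
    show "M$$(i,k) = M$$(j,k) \<and> M$$(k,i) = M$$(k,j)" unfolding 2 3 1 by simp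
  qed
qed

lemma eq_edge:
  assumes gA: "gen_tournament n A" and gB: "gen_tournament n B" and "(i,j) \<in> eq_graph n A B"
  shows "i < n \<and> j < n \<and> i \<noteq> j \<and> B$$(i,j) = A$$(i,j) \<and> A$$(i,j) \<noteq> 1/2"
proof -
  have ij: "i < n" "j < n" "i \<noteq> j" using assms(3) unfolding eq_graph_def by auto
  show ?thesis using assms(3) gt_anti[OF gA ij] gt_anti[OF gB ij] ij unfolding eq_graph_def by auto
qed

lemma diff_edge:
  assumes gA: "gen_tournament n A" and gB: "gen_tournament n B" and "(i,j) \<in> diff_graph n A B"
  shows "i < n \<and> j < n \<and> i \<noteq> j \<and> B$$(i,j) = 1 - A$$(i,j) \<and> A$$(i,j) \<noteq> 1/2"
proof -
  have ij: "i < n" "j < n" "i \<noteq> j" using assms(3) unfolding diff_graph_def by auto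
  show ?thesis using assms(3) gt_anti[OF gA ij] gt_anti[OF gB ij] ij unfolding diff_graph_def by auto
qed

lemma eq_nonedge:
  assumes gA: "gen_tournament n A" and gB: "gen_tournament n B" and s2: "same_principal_minors n 2 A B"
    and ij: "i < n" "j < n" "i \<noteq> j" and ne: "(i,j) \<notin> eq_graph n A B"
  shows "B$$(i,j) = 1 - A$$(i,j)"
  using b_cases[OF gA gB s2 ij] ne ij unfolding eq_graph_def by auto

lemma diff_nonedge:
  assumes gA: "gen_tournament n A" and gB: "gen_tournament n B" and s2: "same_principal_minors n 2 A B"
    and ij: "i < n" "j < n" "i \<noteq> j" and ne: "(i,j) \<notin> diff_graph n A B"
  shows "B$$(i,j) = A$$(i,j)"
  using b_cases[OF gA gB s2 ij] ne ij unfolding diff_graph_def by auto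

theorem proposition4p3:
  fixes n :: nat and A B :: "real mat"
  assumes "gen_tournament n A" and "gen_tournament n B"
    and "same_principal_minors n 2 A B" and "same_principal_minors n 3 A B"
  shows "\<forall>C \<in> components n (eq_graph n A B) \<union> components n (diff_graph n A B).
           clan n A C \<and> clan n B C"
proof -
  note gA = assms(1) and gB = assms(2) and s2 = assms(3) and s3 = assms(4)
  have Esub: "eq_graph n A B \<subseteq> {(i,j). i < n \<and> j < n \<and> i \<noteq> j}" unfolding eq_graph_def by auto
  have Dsub: "diff_graph n A B \<subseteq> {(i,j). i < n \<and> j < n \<and> i \<noteq> j}" unfolding diff_graph_def by auto
  have HE: "A$$(i,k) = A$$(j,k) \<and> B$$(i,k) = B$$(j,k)"
    if "(i,j) \<in> eq_graph n A B" "k < n" "k \<noteq> i" "k \<noteq> j" "(i,k) \<notin> eq_graph n A B" "(j,k) \<notin> eq_graph n A B"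
    for i j k
  proof -
    have ed: "i < n" "j < n" "i \<noteq> j" "B$$(i,j) = A$$(i,j)" "A$$(i,j) \<noteq> 1/2"
      using eq_edge[OF gA gB that(1)] by auto
    have b1: "B$$(i,k) = 1 - A$$(i,k)" using eq_nonedge[OF gA gB s2 ed(1) that(2)] that by auto
    have b2: "B$$(j,k) = 1 - A$$(j,k)" using eq_nonedge[OF gA gB s2 ed(2) that(2)] that by auto
    have "A$$(i,k) = A$$(j,k)"
      using key[OF gA gB s3 ed(1) ed(2) that(2) ed(3)] that ed b1 b2 by auto
    then show ?thesis using b1 b2 by simp
  qed
  have HD: "A$$(i,k) = A$$(j,k) \<and> B$$(i,k) = B$$(j,k)"
    if "(i,j) \<in> diff_graph n A B" "k < n" "k \<noteq> i" "k \<noteq> j" "(i,k) \<notin> diff_graph n A B" "(j,k) \<notin> diff_graph n A B"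
    for i j k
  proof -
    have ed: "i < n" "j < n" "i \<noteq> j" "B$$(i,j) = 1 - A$$(i,j)" "A$$(i,j) \<noteq> 1/2"
      using diff_edge[OF gA gB that(1)] by auto
    have b1: "B$$(i,k) = A$$(i,k)" using diff_nonedge[OF gA gB s2 ed(1) that(2)] that by auto
    have b2: "B$$(j,k) = A$$(j,k)" using diff_nonedge[OF gA gB s2 ed(2) that(2)] that by auto
    have "A$$(i,k) = A$$(j,k)"
      using key[OF gA gB s3 ed(1) ed(2) that(2) ed(3)] that ed b1 b2 by auto
    then show ?thesis using b1 b2 by simp
  qed
  show ?thesis
  proof
    fix C assume "C \<in> components n (eq_graph n A B) \<union> components n (diff_graph n A B)"
    then show "clan n A C \<and> clan n B C"
    proof
      assume "C \<in> components n (eq_graph n A B)"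
      then obtain v where v: "v < n" and C: "C = {w. w < n \<and> (v,w) \<in> (eq_graph n A B)\<^sup>*}"
        unfolding components_def by auto
      show ?thesis unfolding C
        using comp_clan[OF gA Esub _ v] comp_clan[OF gB Esub _ v] HE by blast
    next
      assume "C \<in> components n (diff_graph n A B)"
      then obtain v where v: "v < n" and C: "C = {w. w < n \<and> (v,w) \<in> (diff_graph n A B)\<^sup>*}"
        unfolding components_def by auto
      show ?thesis unfolding C
        using comp_clan[OF gA Dsub _ v] comp_clan[OF gB Dsub _ v] HD by blast
    qed
  qed
qed

end
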